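(* Let $G$ be a graph and $M$ a bipartizing matching of $G$. Then: (i) for every diamond subgraph $D$ of $G$, both vertices of degree $3$ in $D$ are covered by $M$; (ii) for every $v\in V(G)$, the graph $G[N_G(v)]$ does not contain two vertex-disjoint paths on $3$ vertices (as subgraphs); (iii) $G$ does not contain the wheel $W_k$ as a subgraph for any $k\ge 4$; (iv) $G$ does not contain an odd $k$-pool as a subgraph for any odd $k\ge 3$.
   Context: A matching $M\subseteq E(G)$ is a bipartizing matching of $G$ if $(V(G),E(G)\setminus M)$ is bipartite. A diamond is $K_4$ minus one edge. For $k\ge 3$, the wheel $W_k$ is the graph obtained from a cycle $C_k$ by adding a vertex adjacent to all cycle vertices. For $k\ge 3$, a $k$-pool is the graph with vertices $p_1,\dots,p_k,b_1,\dots,b_k$ whose edges are the cycle $p_1p_2\cdots p_kp_1$ and, for each $i$ (indices mod $k$), the edges $b_ip_i$ and $b_ip_{i+1}$; it is odd if $k$ is odd. *)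

theory Defs
  imports Main
begin

definition graph :: "'a set \<Rightarrow> 'a set set \<Rightarrow> bool" where
  "graph V E \<longleftrightarrow> finite V \<and> (\<forall>e\<in>E. \<exists>u v. u \<noteq> v \<and> u \<in> V \<and> v \<in> V \<and> e = {u, v})"

definition matching :: "'a set set \<Rightarrow> 'a set set \<Rightarrow> bool" where
  "matching E M \<longleftrightarrow> M \<subseteq> E \<and> (\<forall>e\<in>M. \<forall>f\<in>M. e \<noteq> f \<longrightarrow> e \<inter> f = {})"

definition bipartite :: "'a set \<Rightarrow> 'a set set \<Rightarrow> bool" where
  "bipartite V E \<longleftrightarrow> (\<exists>A B. A \<inter> B = {} \<and> A \<union> B = V \<and>
      (\<forall>e\<in>E. \<exists>a b. a \<in> A \<and> b \<in> B \<and> e = {a, b}))"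

definition bipartizing_matching :: "'a set \<Rightarrow> 'a set set \<Rightarrow> 'a set set \<Rightarrow> bool" where
  "bipartizing_matching V E M \<longleftrightarrow> matching E M \<and> bipartite V (E - M)"

definition covered :: "'a set set \<Rightarrow> 'a \<Rightarrow> bool" where
  "covered M v \<longleftrightarrow> (\<exists>e\<in>M. v \<in> e)"

definition subgraph_embedding ::
  "('b \<Rightarrow> 'a) \<Rightarrow> 'b set \<Rightarrow> 'b set set \<Rightarrow> 'a set \<Rightarrow> 'a set set \<Rightarrow> bool" where
  "subgraph_embedding f VH EH V E \<longleftrightarrow> inj_on f VH \<and> f ` VH \<subseteq> V \<and> (\<forall>e\<in>EH. f ` e \<in> E)"

definition contains_subgraph :: "'b set \<Rightarrow> 'b set set \<Rightarrow> 'a set \<Rightarrow> 'a set set \<Rightarrow> bool" where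
  "contains_subgraph VH EH V E \<longleftrightarrow> (\<exists>f. subgraph_embedding f VH EH V E)"

definition neighborhood :: "'a set set \<Rightarrow> 'a \<Rightarrow> 'a set" where
  "neighborhood E v = {u. {u, v} \<in> E}"

definition induced_edges :: "'a set set \<Rightarrow> 'a set \<Rightarrow> 'a set set" where
  "induced_edges E S = {e \<in> E. e \<subseteq> S}"

text \<open>Diamond = K4 minus the edge {2,3}; vertices 0 and 1 have degree 3.\<close>
definition diamond_V :: "nat set" where "diamond_V = {0,1,2,3}"
definition diamond_E :: "nat set set" where
  "diamond_E = {{0,1},{0,2},{0,3},{1,2},{1,3}}"

definition two_P3_V :: "nat set" where "two_P3_V = {0..5}"
definition two_P3_E :: "nat set set" where
  "two_P3_E = {{0,1},{1,2},{3,4},{4,5}}"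

definition wheel_V :: "nat \<Rightarrow> nat set" where "wheel_V k = {0..k}"
definition wheel_E :: "nat \<Rightarrow> nat set set" where
  "wheel_E k = {{i, (i + 1) mod k} | i. i < k} \<union> {{k, i} | i. i < k}"

text \<open>k-pool: p_i = i (i < k), b_i = k + i; cycle p_0...p_{k-1}, and b_i adjacent to
  p_i and p_{i+1} (indices mod k).\<close>
definition pool_V :: "nat \<Rightarrow> nat set" where "pool_V k = {0..<2*k}"
definition pool_E :: "nat \<Rightarrow> nat set set" where
  "pool_E k = {{i, (i + 1) mod k} | i. i < k} \<union> {{k + i, i} | i. i < k}
              \<union> {{k + i, (i + 1) mod k} | i. i < k}"

end

theory Submission
  imports Defs
begin

lemma col_fix:
  assumes "bipartite V (E - M)"
  obtains A where "\<And>x y. {x,y} \<in> E \<Longrightarrow> {x,y} \<notin> M \<Longrightarrow> (x \<in> A) \<noteq> (y \<in> A)"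
proof -
  from assms(1) obtain A B where AB: "A \<inter> B = {}" "\<forall>e\<in>E - M. \<exists>a b. a \<in> A \<and> b \<in> B \<and> e = {a, b}"
    unfolding bipartite_def by blast
  have "(x \<in> A) \<noteq> (y \<in> A)" if "{x,y} \<in> E" "{x,y} \<notin> M" for x y
  proof -
    have "{x,y} \<in> E - M" using that by simp
    then obtain a b where ab: "a \<in> A" "b \<in> B" "{x,y} = {a,b}" using AB(2) by blast
    have "a \<notin> B" "b \<notin> A" using ab AB(1) by blast+
    then show ?thesis using ab(1,2) ab(3)[unfolded doubleton_eq_iff] by blast
  qed
  then show ?thesis by (rule that)
qed

lemma tri:
  assumes "bipartite V (E - M)" "{x,y} \<in> E" "{y,z} \<in> E" "{x,z} \<in> E"
  shows "{x,y} \<in> M \<or> {y,z} \<in> M \<or> {x,z} \<in> M"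
proof (rule ccontr)
  obtain A where A: "\<And>x y. {x,y} \<in> E \<Longrightarrow> {x,y} \<notin> M \<Longrightarrow> (x \<in> A) \<noteq> (y \<in> A)"
    using col_fix[OF assms(1)] by blast
  assume "\<not> ?thesis"
  then show False using A[of x y] A[of y z] A[of x z] assms by blast
qed

lemma match:
  assumes "matching E M" "{x,y} \<in> M" "{x,z} \<in> M"
  shows "y = z"
proof -
  have m: "\<forall>e\<in>M. \<forall>f\<in>M. e \<noteq> f \<longrightarrow> e \<inter> f = {}" using assms(1) unfolding matching_def by (rule conjunct2)
  have "{x,y} = {x,z}"
  proof (rule ccontr)
    assume ne: "{x,y} \<noteq> {x,z}"
    have "{x,y} \<inter> {x,z} = {}" by (rule m[rule_format, OF assms(2) assms(3) ne])
    then show False by simp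
  qed
  then show ?thesis by (metis doubleton_eq_iff)
qed

lemma p3:
  assumes "bipartite V (E - M)" "matching E M"
    "{v,x} \<in> E" "{v,y} \<in> E" "{v,z} \<in> E" "{x,y} \<in> E" "{y,z} \<in> E" "x \<noteq> z"
  shows "{v,x} \<in> M \<or> {v,y} \<in> M \<or> {v,z} \<in> M"
proof (rule ccontr)
  assume n: "\<not> ?thesis"
  have 1: "{v,x} \<in> M \<or> {x,y} \<in> M \<or> {v,y} \<in> M" using tri[OF assms(1) assms(3) assms(6) assms(4)] .
  have 2: "{v,y} \<in> M \<or> {y,z} \<in> M \<or> {v,z} \<in> M" using tri[OF assms(1) assms(4) assms(7) assms(5)] .
  have "{y,x} \<in> M" "{y,z} \<in> M" using 1 2 n by (auto simp: insert_commute)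
  then have "x = z" using match[OF assms(2)] by blast
  with assms(8) show False by blast
qed

lemma emb_edge:
  assumes "subgraph_embedding f VH EH V E" "{a,b} \<in> EH"
  shows "{f a, f b} \<in> E"
  using assms unfolding subgraph_embedding_def by force

lemma emb_inj:
  assumes "subgraph_embedding f VH EH V E" "a \<in> VH" "b \<in> VH" "a \<noteq> b"
  shows "f a \<noteq> f b"
  using assms unfolding subgraph_embedding_def by (meson inj_on_contraD)

lemma graph_ne:
  assumes "graph V E" "{a,b} \<in> E" shows "a \<noteq> b"
  using assms unfolding graph_def by (metis doubleton_eq_iff insert_absorb2)

lemma modd: "4 \<le> k \<Longrightarrow> i < k \<Longrightarrow> a < 4 \<Longrightarrow> b < (4::nat) \<Longrightarrow> (i+a) mod k = (i+b) mod k \<Longrightarrow> a = b"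
proof -
  assume h: "4 \<le> k" "i < k" "a < 4" "b < 4" "(i+a) mod k = (i+b) mod k"
  have m: "x < 2*k \<Longrightarrow> x mod k = (if x < k then x else x - k)" for x
    by (simp add: le_mod_geq)
  show "a = b" using h m[of "i+a"] m[of "i+b"] by (auto split: if_splits)
qed
lemma modd3: "3 \<le> k \<Longrightarrow> i < k \<Longrightarrow> a < 3 \<Longrightarrow> b < (3::nat) \<Longrightarrow> (i+a) mod k = (i+b) mod k \<Longrightarrow> a = b"
proof -
  assume h: "3 \<le> k" "i < k" "a < 3" "b < 3" "(i+a) mod k = (i+b) mod k"
  have m: "x < 2*k \<Longrightarrow> x mod k = (if x < k then x else x - k)" for x
    by (simp add: le_mod_geq)
  show "a = b" using h m[of "i+a"] m[of "i+b"] by (auto split: if_splits)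
qed
lemma "((i+1) mod k + 1) mod (k::nat) = (i+2) mod k" by (simp add: mod_Suc_eq)


lemma cov: "{x,y} \<in> M \<Longrightarrow> covered M x \<and> covered M y"
  unfolding covered_def by blast

lemma part1:
  assumes bip: "bipartite V (E - M)" and mat: "matching E M"
    and emb: "subgraph_embedding f diamond_V diamond_E V E"
  shows "covered M (f 0) \<and> covered M (f 1)"
proof -
  have e: "{f 0, f 1} \<in> E" "{f 0, f 2} \<in> E" "{f 0, f 3} \<in> E" "{f 1, f 2} \<in> E" "{f 1, f 3} \<in> E"
    by (rule emb_edge[OF emb], simp add: diamond_E_def)+
  have d: "f 2 \<noteq> f 3" by (rule emb_inj[OF emb]) (simp_all add: diamond_V_def)
  have t1: "{f 0,f 1} \<in> M \<or> {f 1,f 2} \<in> M \<or> {f 0,f 2} \<in> M" by (rule tri[OF bip e(1) e(4) e(2)])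
  have t2: "{f 0,f 1} \<in> M \<or> {f 1,f 3} \<in> M \<or> {f 0,f 3} \<in> M" by (rule tri[OF bip e(1) e(5) e(3)])
  have n0: "\<not> ({f 0,f 2} \<in> M \<and> {f 0,f 3} \<in> M)"
  proof
    assume "{f 0,f 2} \<in> M \<and> {f 0,f 3} \<in> M"
    then have "f 2 = f 3" using match[OF mat, of "f 0" "f 2" "f 3"] by simp
    with d show False by simp
  qed
  have n1: "\<not> ({f 1,f 2} \<in> M \<and> {f 1,f 3} \<in> M)"
  proof
    assume "{f 1,f 2} \<in> M \<and> {f 1,f 3} \<in> M"
    then have "f 2 = f 3" using match[OF mat, of "f 1" "f 2" "f 3"] by simp
    with d show False by simp
  qed
  show ?thesis
  proof (cases "{f 0,f 1} \<in> M")
    case True then show ?thesis using cov[OF True] by simp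
  next
    case False
    show ?thesis
    proof (cases "{f 1,f 2} \<in> M")
      case True
      then have "{f 0,f 3} \<in> M" using t2 n1 False by simp
      then show ?thesis using cov[OF True] cov[of "f 0" "f 3" M] by simp
    next
      case F2: False
      then have a: "{f 0,f 2} \<in> M" using t1 False by simp
      then have "{f 1,f 3} \<in> M" using t2 n0 False by simp
      then show ?thesis using cov[OF a] cov[of "f 1" "f 3" M] by simp
    qed
  qed
qed

lemma part2:
  assumes g: "graph V E" and bip: "bipartite V (E - M)" and mat: "matching E M"
    and emb: "subgraph_embedding g two_P3_V two_P3_E (neighborhood E v) (induced_edges E (neighborhood E v))"
  shows False
proof -
  have nb: "{v, g i} \<in> E" if "i \<le> 5" for i
  proof -
    have "g i \<in> neighborhood E v" using emb that unfolding subgraph_embedding_def two_P3_V_def by auto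
    then show ?thesis unfolding neighborhood_def by (simp add: insert_commute)
  qed
  have ie: "{g a, g b} \<in> E" if "{a,b} \<in> two_P3_E" for a b
    using emb_edge[OF emb that] unfolding induced_edges_def by simp
  have inj: "g a \<noteq> g b" if "a \<le> 5" "b \<le> 5" "a \<noteq> b" for a b
    by (rule emb_inj[OF emb]) (use that in \<open>auto simp: two_P3_V_def\<close>)
  have q1: "{v,g 0} \<in> M \<or> {v,g 1} \<in> M \<or> {v,g 2} \<in> M"
    by (rule p3[OF bip mat nb nb nb ie ie inj]) (simp_all add: two_P3_E_def)
  have q2: "{v,g 3} \<in> M \<or> {v,g 4} \<in> M \<or> {v,g 5} \<in> M"
    by (rule p3[OF bip mat nb nb nb ie ie inj]) (simp_all add: two_P3_E_def)
  have mm: "a = b" if "{v,a} \<in> M" "{v,b} \<in> M" for a b using match[OF mat that] .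
  have "g i \<noteq> g j" if "i \<in> {0,1,2}" "j \<in> {3,4,5::nat}" for i j
    using inj[of i j] that by auto
  note ne = this
  obtain i where i: "i \<in> {0,1,2::nat}" "{v, g i} \<in> M" using q1 by blast
  obtain j where j: "j \<in> {3,4,5::nat}" "{v, g j} \<in> M" using q2 by blast
  have "g i = g j" using mm[OF i(2) j(2)] .
  with ne[OF i(1) j(1)] show False by simp
qed

lemma part3:
  assumes bip: "bipartite V (E - M)" and mat: "matching E M" and k: "4 \<le> k"
    and emb: "subgraph_embedding g (wheel_V k) (wheel_E k) V E"
  shows False
proof -
  define h where "h = g k"
  have he: "{h, g i} \<in> E" if "i < k" for i
    unfolding h_def by (rule emb_edge[OF emb]) (use that in \<open>auto simp: wheel_E_def\<close>)
  have ce: "{g i, g ((i+1) mod k)} \<in> E" if "i < k" for i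
    by (rule emb_edge[OF emb]) (use that in \<open>auto simp: wheel_E_def\<close>)
  have inj: "g a \<noteq> g b" if "a < k" "b < k" "a \<noteq> b" for a b
    by (rule emb_inj[OF emb]) (use that in \<open>auto simp: wheel_V_def\<close>)
  have kp: "0 < k" using k by simp
  have key: "\<exists>j<k. j \<noteq> i \<and> {h, g j} \<in> M" if i: "i < k" for i
  proof -
    define i1 where "i1 = (i+1) mod k"
    define i2 where "i2 = (i+2) mod k"
    define i3 where "i3 = (i+3) mod k"
    have lt: "i1 < k" "i2 < k" "i3 < k" unfolding i1_def i2_def i3_def using kp by simp_all
    have s12: "(i1 + 1) mod k = i2" unfolding i1_def i2_def by (simp add: mod_Suc_eq)
    have s23: "(i2 + 1) mod k = i3" unfolding i2_def i3_def by (simp add: mod_Suc_eq numeral_3_eq_3)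
    have ne: "i1 \<noteq> i" "i2 \<noteq> i" "i3 \<noteq> i" "i1 \<noteq> i3"
      using modd[OF k i, of 1 0] modd[OF k i, of 2 0] modd[OF k i, of 3 0] modd[OF k i, of 1 3]
      unfolding i1_def i2_def i3_def by (auto simp: mod_less[OF i])
    have e1: "{g i1, g i2} \<in> E" using ce[OF lt(1)] s12 by simp
    have e2: "{g i2, g i3} \<in> E" using ce[OF lt(2)] s23 by simp
    have "{h, g i1} \<in> M \<or> {h, g i2} \<in> M \<or> {h, g i3} \<in> M"
      by (rule p3[OF bip mat he[OF lt(1)] he[OF lt(2)] he[OF lt(3)] e1 e2 inj[OF lt(1) lt(3) ne(4)]])
    then show ?thesis using lt ne by blast
  qed
  obtain j0 where j0: "j0 < k" "{h, g j0} \<in> M" using key[OF kp] by blast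
  obtain j where j: "j < k" "j \<noteq> j0" "{h, g j} \<in> M" using key[OF j0(1)] by blast
  have "g j = g j0" using match[OF mat j(3) j0(2)] .
  with inj[OF j(1) j0(1) j(2)] show False by simp
qed

lemma part4:
  assumes bip: "bipartite V (E - M)" and mat: "matching E M" and k: "3 \<le> k" and od: "odd k"
    and emb: "subgraph_embedding g (pool_V k) (pool_E k) V E"
  shows False
proof -
  define s where "s i = (i+1) mod k" for i
  have kp: "0 < k" using k by simp
  have slt: "s i < k" for i unfolding s_def using kp by simp
  have e1: "{g i, g (s i)} \<in> E" if "i < k" for i
    by (rule emb_edge[OF emb]) (use that in \<open>auto simp: pool_E_def s_def\<close>)
  have e2: "{g (k+i), g i} \<in> E" if "i < k" for i
    by (rule emb_edge[OF emb]) (use that in \<open>auto simp: pool_E_def\<close>)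
  have e3: "{g (k+i), g (s i)} \<in> E" if "i < k" for i
    by (rule emb_edge[OF emb]) (use that in \<open>auto simp: pool_E_def s_def\<close>)
  have inj: "x = y" if "x < 2*k" "y < 2*k" "g x = g y" for x y
    using emb_inj[OF emb, of x y] that by (auto simp: pool_V_def)
  define R where "R x y \<longleftrightarrow> {g x, g y} \<in> M" for x y
  have Rsym: "R x y \<longleftrightarrow> R y x" for x y unfolding R_def by (simp add: insert_commute)
  have Rfun: "y = z" if "y < 2*k" "z < 2*k" "R x y" "R x z" for x y z
    using inj[OF that(1,2)] match[OF mat, of "g x" "g y" "g z"] that(3,4) unfolding R_def by simp
  define P where "P i = {(i, s i), (i, k+i), (s i, k+i)}" for i
  have ex: "\<exists>p. p \<in> P i \<and> R (fst p) (snd p)" if "i < k" for i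
  proof -
    have "{g (k+i), g i} \<in> M \<or> {g i, g (s i)} \<in> M \<or> {g (k+i), g (s i)} \<in> M"
      by (rule tri[OF bip e2[OF that] e1[OF that] e3[OF that]])
    then have "R i (s i) \<or> R i (k+i) \<or> R (s i) (k+i)" unfolding R_def by (auto simp: insert_commute)
    then show ?thesis unfolding P_def by auto
  qed
  then have "\<forall>i\<in>{..<k}. \<exists>p. p \<in> P i \<and> R (fst p) (snd p)" by simp
  then obtain c where c: "\<forall>i\<in>{..<k}. c i \<in> P i \<and> R (fst (c i)) (snd (c i))"
    by (metis bchoice)
  have Pb: "fst p < k \<and> snd p < 2*k" if "p \<in> P i" "i < k" for p i
    using that slt[of i] unfolding P_def by auto
  have Pd: "i = i'" if "p \<in> P i" "p \<in> P i'" "i < k" "i' < k" for p i i'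
    using that slt[of i] slt[of i'] unfolding P_def by auto
  define phi where "phi i = fst (c i)" for i
  have injphi: "inj_on phi {..<k}"
  proof (rule inj_onI)
    fix i i' assume ii: "i \<in> {..<k}" "i' \<in> {..<k}" "phi i = phi i'"
    have ci: "c i \<in> P i" "R (fst (c i)) (snd (c i))" using c ii(1) by auto
    have ci': "c i' \<in> P i'" "R (fst (c i')) (snd (c i'))" using c ii(2) by auto
    have "snd (c i) = snd (c i')"
      by (rule Rfun[of _ _ "fst (c i)"]) (use ci ci' ii Pb in \<open>auto simp: phi_def\<close>)
    then have "c i = c i'" using ii(3) unfolding phi_def by (simp add: prod_eq_iff)
    then show "i = i'" using Pd[of "c i" i i'] ci(1) ci'(1) ii by auto
  qed
  have sub: "phi ` {..<k} \<subseteq> {..<k}"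
  proof
    fix x assume "x \<in> phi ` {..<k}"
    then obtain i where i: "i < k" "x = phi i" by auto
    have "c i \<in> P i" using c i(1) by auto
    then show "x \<in> {..<k}" using Pb[of "c i" i] i unfolding phi_def by auto
  qed
  have surj: "phi ` {..<k} = {..<k}" by (rule endo_inj_surj[OF _ sub injphi]) simp
  have noR: "\<not> R j (s j)" if j: "j < k" for j
  proof
    assume r: "R j (s j)"
    have "s j \<in> phi ` {..<k}" using surj slt by auto
    then obtain i2 where i2: "i2 < k" "phi i2 = s j" by auto
    have ci: "c i2 \<in> P i2" "R (fst (c i2)) (snd (c i2))" using c i2(1) by auto
    have "snd (c i2) = j"
      by (rule Rfun[of _ _ "s j"]) (use ci i2 Pb r Rsym j in \<open>auto simp: phi_def\<close>)
    then have "c i2 = (s j, j)" using i2(2) unfolding phi_def by (simp add: prod_eq_iff)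
    then have "(s j, j) \<in> P i2" using ci(1) by simp
    then have "s (s j) = j" unfolding P_def using j i2(1) by auto
    then have "(j+2) mod k = (j+0) mod k" unfolding s_def using mod_less[OF j] by (simp add: mod_Suc_eq)
    then show False using modd3[OF k j, of 2 0] by simp
  qed
  obtain A where A: "\<And>x y. {x,y} \<in> E \<Longrightarrow> {x,y} \<notin> M \<Longrightarrow> (x \<in> A) \<noteq> (y \<in> A)"
    using col_fix[OF bip] by blast
  have alt: "(g i \<in> A) \<noteq> (g (s i) \<in> A)" if "i < k" for i
    using A[OF e1[OF that]] noR[OF that] unfolding R_def by simp
  have par: "i < k \<Longrightarrow> (g i \<in> A) = ((g 0 \<in> A) = even i)" for i
  proof (induction i)
    case 0 then show ?case by simp
  next
    case (Suc i)
    have "s i = Suc i" unfolding s_def using Suc.prems by simp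
    then show ?case using Suc alt[of i] by auto
  qed
  have "s (k - 1) = 0" unfolding s_def using kp by simp
  then have "(g (k-1) \<in> A) \<noteq> (g 0 \<in> A)" using alt[of "k-1"] kp by simp
  moreover have "even (k - 1)" using od kp by simp
  ultimately show False using par[of "k-1"] kp by simp
qed

theorem lemma1:
  fixes V :: "'a set" and E M :: "'a set set"
  assumes "graph V E"
    and "bipartizing_matching V E M"
  shows "(\<forall>f. subgraph_embedding f diamond_V diamond_E V E \<longrightarrow> covered M (f 0) \<and> covered M (f 1))
       \<and> (\<forall>v\<in>V. \<not> contains_subgraph two_P3_V two_P3_E
                      (neighborhood E v) (induced_edges E (neighborhood E v)))
       \<and> (\<forall>k\<ge>4. \<not> contains_subgraph (wheel_V k) (wheel_E k) V E)
       \<and> (\<forall>k\<ge>3. odd k \<longrightarrow> \<not> contains_subgraph (pool_V k) (pool_E k) V E)"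
proof -
  have mat: "matching E M" and bip: "bipartite V (E - M)"
    using assms(2) unfolding bipartizing_matching_def by simp_all
  show ?thesis
    unfolding contains_subgraph_def
    using part1[OF bip mat] part2[OF assms(1) bip mat] part3[OF bip mat] part4[OF bip mat]
    by blast
qed

end
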